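(* Let $a\leq b$ be integers and let $f:[a,b]\to\mathbb{R}$ be twice differentiable with $|f''|\leq M$ on $[a,b]$. For all $\alpha\in f'([a,b])$ and all $R\geq 1$, \[ \left|\{n\in(a,b]\cap\mathbb{Z}:\ \lfloor f(n)\rfloor\neq\lfloor n\alpha+f(a)-a\alpha\rfloor\}\right| \leq 2M(b-a)^3+\frac{b-a}{R}+\sum_{1\leq r\leq R}\frac 1r\left|\sum_{a<n\leq b}e(nr\alpha)\right|. \]
   Context: $e(x)=e^{2\pi i x}$; $\lfloor\cdot\rfloor$ is the floor function; sums over $r$ and $n$ range over integers. *)

theory Defs
  imports Complex_Main
begin

definition e :: "real \<Rightarrow> complex" where
  "e x = exp (2 * of_real pi * \<i> * of_real x)"

end

theory Submission
  imports Defs "HOL-Analysis.Complex_Transcendental"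
begin


lemma e_cis: "e x = cis (2*pi*x)"
  unfolding e_def cis_conv_exp by (simp add: mult_ac)

lemma e_add: "e (x+y) = e x * e y"
  by (simp add: e_cis cis_mult distrib_left)

lemma norm_e [simp]: "norm (e x) = 1"
  by (simp add: e_cis)

lemma e_int: "e (of_int z) = 1"
  unfolding e_cis by (rule cis_multiple_2pi) simp

lemma cnj_e: "cnj (e x) = e (-x)"
  by (simp add: e_cis cis_cnj)

lemma Re_e: "Re (e x) = cos (2*pi*x)"
  by (simp add: e_cis)

lemma cos_lb: "cos (y::real) \<ge> 1 - y^2/2"
proof -
  have "cos y = cos (2*(y/2))" by simp
  also have "\<dots> = 1 - 2 * sin (y/2)^2" by (rule cos_double_sin)
  finally have c: "cos y = 1 - 2 * sin (y/2)^2" .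
  have "sin (y/2)^2 = \<bar>sin (y/2)\<bar>^2" by simp
  also have "\<dots> \<le> \<bar>y/2\<bar>^2" by (rule power_mono) (use abs_sin_x_le_abs_x[of "y/2"] in auto)
  finally show ?thesis using c by (simp add: power_divide)
qed

lemma sum_sq: "(\<Sum>j\<le>m. (real j)^2) = real m * (m+1) * (2*m+1) / 6"
  by (induction m) (simp_all add: field_simps power2_eq_square)

lemma sum_id: "(\<Sum>j\<le>m. real j) = real m * (m+1) / 2"
  by (induction m) (simp_all add: field_simps)

lemma sum_centered: "(\<Sum>j\<le>m. (real j - real m/2)^2) = real m * (m+1) * (m+2) / 12"
proof -
  have "(\<Sum>j\<le>m. (real j - real m/2)^2) = (\<Sum>j\<le>m. (real j)^2) - real m * (\<Sum>j\<le>m. real j) + (m+1) * (real m/2)^2"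
    by (simp add: power2_diff sum.distrib sum_subtractf sum_distrib_left algebra_simps)
  also have "\<dots> = real m * (m+1) * (m+2) / 12"
    unfolding sum_sq sum_id by (simp add: field_simps power2_eq_square)
  finally show ?thesis .
qed

definition W :: "nat \<Rightarrow> real \<Rightarrow> complex" where
  "W m x = (\<Sum>j\<le>m. e (real j * x))"

lemma W_periodic: "W m (x - of_int z) = W m x"
proof -
  have "e (real j * (x - of_int z)) = e (real j * x)" for j
  proof -
    have "real j * (x - of_int z) = real j * x + of_int (- (int j * z))" by (simp add: algebra_simps)
    then show ?thesis by (simp only: e_add e_int) simp
  qed
  then show ?thesis unfolding W_def by simp
qed

lemma W_lower:
  assumes pi_ub: "pi \<le> 3.15" and "(real m + 1) * \<bar>x\<bar> \<le> t"
  shows "norm (W m x) \<ge> (real m + 1) * (1 - 5/3 * t^2)"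
proof -
  have "norm (W m x) = norm (e (- (real m / 2) * x) * W m x)" by (simp add: norm_mult)
  also have "e (- (real m / 2) * x) * W m x = (\<Sum>j\<le>m. e ((real j - real m/2) * x))"
    unfolding W_def sum_distrib_left by (intro sum.cong refl) (simp add: e_add[symmetric] algebra_simps)
  finally have r: "Re (\<Sum>j\<le>m. e ((real j - real m/2) * x)) \<le> norm (W m x)"
    using complex_Re_le_cmod by metis
  have "(real m + 1) - pi^2/6*x^2 * (real m * (m+2)) * (m+1) = (real m + 1) - 2*pi^2*x^2 * (\<Sum>j\<le>m. (real j - real m/2)^2)"
    unfolding sum_centered by (simp add: field_simps)
  also have "\<dots> = (\<Sum>j\<le>m. 1 - 2*pi^2*x^2*(real j - real m/2)^2)"
    by (simp add: sum_subtractf sum_distrib_left)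
  also have "\<dots> = (\<Sum>j\<le>m. 1 - (2*pi*((real j - real m/2) * x))^2/2)"
    by (intro sum.cong refl) (simp add: power_mult_distrib)
  also have "\<dots> \<le> (\<Sum>j\<le>m. cos (2*pi*((real j - real m/2) * x)))"
    by (intro sum_mono cos_lb)
  also have "\<dots> = Re (\<Sum>j\<le>m. e ((real j - real m/2) * x))"
    by (simp add: Re_e)
  also note r
  finally have 1: "norm (W m x) \<ge> (real m + 1) - pi^2/6*x^2 * (real m * (m+2)) * (m+1)" .
  have p2: "pi^2 \<le> 10"
  proof -
    have "pi*pi \<le> 3.15*3.15" by (rule mult_mono) (use pi_ub in auto)
    then show ?thesis by (simp add: power2_eq_square)
  qed
  have "x^2 * (real m * (m+2)) \<le> x^2 * (real m + 1)^2"
    by (intro mult_left_mono) (auto simp: power2_eq_square algebra_simps)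
  also have "\<dots> = ((real m + 1) * \<bar>x\<bar>)^2" by (simp add: power_mult_distrib)
  also have "\<dots> \<le> t^2" by (rule power_mono) (use assms in auto)
  finally have 2: "x^2 * (real m * (m+2)) \<le> t^2" .
  have "pi^2/6*x^2 * (real m * (m+2)) \<le> 10/6 * t^2"
  proof -
    have "pi^2/6*x^2 * (real m * (m+2)) = pi^2/6 * (x^2 * (real m * (m+2)))" by simp
    also have "\<dots> \<le> 10/6 * t^2" by (intro mult_mono) (use p2 2 in auto)
    finally show ?thesis .
  qed
  then have "pi^2/6*x^2 * (real m * (m+2)) * (m+1) \<le> 10/6 * t^2 * (m+1)"
    by (intro mult_right_mono) auto
  moreover have "(real m+1)*(1 - 5/3*t^2) = (real m+1) - 10/6*t^2*(real m+1)" by (simp add: algebra_simps)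
  moreover have "real (m+1) = real m + 1" by simp
  ultimately show ?thesis using 1 by (simp only: of_nat_add of_nat_1)
qed

lemma norm_W_sq: "(norm (W m x))^2 = Re (\<Sum>j\<le>m. \<Sum>l\<le>m. e ((real j - real l) * x))"
proof -
  have "complex_of_real ((norm (W m x))^2) = W m x * cnj (W m x)" by (rule complex_norm_square)
  also have "\<dots> = (\<Sum>j\<le>m. \<Sum>l\<le>m. e (real j * x) * e (- (real l * x)))"
    unfolding W_def cnj_sum cnj_e sum_product ..
  also have "\<dots> = (\<Sum>j\<le>m. \<Sum>l\<le>m. e ((real j - real l) * x))"
    by (intro sum.cong refl) (simp add: e_add[symmetric] algebra_simps)
  finally show ?thesis by (metis Re_complex_of_real)
qed

definition S :: "int set \<Rightarrow> (int \<Rightarrow> real) \<Rightarrow> real \<Rightarrow> complex" where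
  "S A x d = (\<Sum>n\<in>A. e (d * x n))"

lemma norm_S_neg: "norm (S A x (-d)) = norm (S A x d)"
proof -
  have "S A x (-d) = cnj (S A x d)" unfolding S_def cnj_sum cnj_e by simp
  then show ?thesis by simp
qed

lemma sum_W_sq:
  "(\<Sum>n\<in>A. (norm (W m (x n)))^2) \<le> (\<Sum>j\<le>m. \<Sum>l\<le>m. norm (S A x (real j - real l)))"
proof -
  have "(\<Sum>n\<in>A. (norm (W m (x n)))^2) = Re (\<Sum>j\<le>m. \<Sum>l\<le>m. S A x (real j - real l))"
    unfolding norm_W_sq S_def Re_sum
    by (subst sum.swap) (intro sum.cong refl, subst sum.swap, rule refl)
  also have "\<dots> \<le> norm (\<Sum>j\<le>m. \<Sum>l\<le>m. S A x (real j - real l))" by (rule complex_Re_le_cmod)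
  also have "\<dots> \<le> (\<Sum>j\<le>m. norm (\<Sum>l\<le>m. S A x (real j - real l)))" by (rule norm_sum)
  also have "\<dots> \<le> (\<Sum>j\<le>m. \<Sum>l\<le>m. norm (S A x (real j - real l)))" by (intro sum_mono norm_sum)
  finally show ?thesis .
qed

lemma rev_sum_Suc: "(\<Sum>j\<le>m. g (Suc m - j)) = (\<Sum>k\<in>{1..Suc m}. (g k :: real))"
proof (induction m)
  case 0 then show ?case by simp
next
  case (Suc m)
  have "(\<Sum>j\<le>Suc m. g (Suc (Suc m) - j)) = g (Suc (Suc m)) + (\<Sum>j\<le>m. g (Suc m - j))"
    by (subst sum.atMost_Suc_shift) simp
  also have "\<dots> = (\<Sum>k\<in>{1..Suc (Suc m)}. g k)" using Suc by simp
  finally show ?case .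
qed

lemma double_sum_dist:
  fixes \<phi> :: "nat \<Rightarrow> real"
  shows "(\<Sum>j\<le>m. \<Sum>l\<le>m. \<phi> (if l \<le> j then j - l else l - j))
       = (real m + 1) * \<phi> 0 + 2 * (\<Sum>k\<in>{1..m}. (real m + 1 - real k) * \<phi> k)"
proof (induction m)
  case 0 then show ?case by simp
next
  case (Suc m)
  let ?F = "\<lambda>j l. \<phi> (if l \<le> j then j - l else l - j)"
  have a: "(\<Sum>j\<le>m. ?F j (Suc m)) = (\<Sum>k\<in>{1..Suc m}. \<phi> k)"
  proof -
    have "(\<Sum>j\<le>m. ?F j (Suc m)) = (\<Sum>j\<le>m. \<phi> (Suc m - j))" by (intro sum.cong) auto
    then show ?thesis using rev_sum_Suc by simp
  qed
  have b: "(\<Sum>l\<le>m. ?F (Suc m) l) = (\<Sum>k\<in>{1..Suc m}. \<phi> k)"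
  proof -
    have "(\<Sum>l\<le>m. ?F (Suc m) l) = (\<Sum>j\<le>m. \<phi> (Suc m - j))" by (intro sum.cong) auto
    then show ?thesis using rev_sum_Suc by simp
  qed
  have "(\<Sum>j\<le>Suc m. \<Sum>l\<le>Suc m. ?F j l)
      = (\<Sum>j\<le>m. \<Sum>l\<le>m. ?F j l) + (\<Sum>j\<le>m. ?F j (Suc m)) + (\<Sum>l\<le>m. ?F (Suc m) l) + \<phi> 0"
    by (simp add: sum.distrib)
  also have "\<dots> = (real m + 1) * \<phi> 0 + 2 * (\<Sum>k\<in>{1..m}. (real m + 1 - real k) * \<phi> k)
       + 2 * (\<Sum>k\<in>{1..Suc m}. \<phi> k) + \<phi> 0"
    using Suc a b by simp
  also have "\<dots> = (real (Suc m) + 1) * \<phi> 0 + 2 * (\<Sum>k\<in>{1..Suc m}. (real (Suc m) + 1 - real k) * \<phi> k)"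
  proof -
    have "(\<Sum>k\<in>{1..Suc m}. (real (Suc m) + 1 - real k) * \<phi> k) = (\<Sum>k\<in>{1..Suc m}. (real m + 1 - real k) * \<phi> k + \<phi> k)"
      by (intro sum.cong) (auto simp: algebra_simps)
    also have "\<dots> = (\<Sum>k\<in>{1..Suc m}. (real m + 1 - real k) * \<phi> k) + (\<Sum>k\<in>{1..Suc m}. \<phi> k)"
      by (rule sum.distrib)
    also have "(\<Sum>k\<in>{1..Suc m}. (real m + 1 - real k) * \<phi> k) = (\<Sum>k\<in>{1..m}. (real m + 1 - real k) * \<phi> k)"
      by simp
    finally show ?thesis by (simp add: algebra_simps)
  qed
  finally show ?case .
qed


lemma count_bound:
  assumes pi_ub: "pi \<le> 3.15" and fin: "finite A" and w: "0 \<le> w" and mt: "(real m + 1) * w \<le> t"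
    and u: "0 \<le> 1 - 5/3*t^2"
  shows "real (card {n\<in>A. \<exists>z::int. \<bar>x n - of_int z\<bar> \<le> w}) * ((real m + 1)*(1 - 5/3*t^2))^2
     \<le> (real m + 1) * real (card A) + 2 * (\<Sum>k\<in>{1..m}. (real m + 1 - real k) * norm (S A x (real k)))"
proof -
  define B where "B = {n\<in>A. \<exists>z::int. \<bar>x n - of_int z\<bar> \<le> w}"
  define c0 where "c0 = (real m + 1)*(1 - 5/3*t^2)"
  have c0: "0 \<le> c0" unfolding c0_def using u by simp
  have BA: "B \<subseteq> A" unfolding B_def by auto
  have "real (card B) * c0^2 = (\<Sum>n\<in>B. c0^2)" by simp
  also have "\<dots> \<le> (\<Sum>n\<in>B. (norm (W m (x n)))^2)"
  proof (intro sum_mono)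
    fix n assume "n \<in> B"
    then obtain z :: int where z: "\<bar>x n - of_int z\<bar> \<le> w" unfolding B_def by auto
    have "(real m + 1) * \<bar>x n - of_int z\<bar> \<le> (real m + 1) * w"
      by (intro mult_left_mono z) auto
    with mt have "(real m + 1) * \<bar>x n - of_int z\<bar> \<le> t" by linarith
    then have "c0 \<le> norm (W m (x n - of_int z))" unfolding c0_def by (rule W_lower[OF pi_ub])
    then have "c0 \<le> norm (W m (x n))" by (simp only: W_periodic)
    then show "c0^2 \<le> (norm (W m (x n)))^2" by (intro power_mono c0)
  qed
  also have "\<dots> \<le> (\<Sum>n\<in>A. (norm (W m (x n)))^2)"
    by (intro sum_mono2 fin BA) auto
  also have "\<dots> \<le> (\<Sum>j\<le>m. \<Sum>l\<le>m. norm (S A x (real j - real l)))" by (rule sum_W_sq)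
  also have "\<dots> = (\<Sum>j\<le>m. \<Sum>l\<le>m. (\<lambda>k. norm (S A x (real k))) (if l \<le> j then j - l else l - j))"
  proof (intro sum.cong refl)
    fix j l :: nat
    show "norm (S A x (real j - real l)) = (\<lambda>k. norm (S A x (real k))) (if l \<le> j then j - l else l - j)"
    proof (cases "l \<le> j")
      case True then show ?thesis by (simp add: of_nat_diff)
    next
      case False
      then have "real j - real l = - real (l - j)" by (simp add: of_nat_diff)
      then have "norm (S A x (real j - real l)) = norm (S A x (real (l - j)))" by (simp only: norm_S_neg)
      then show ?thesis using False by simp
    qed
  qed
  also have "\<dots> = (real m + 1) * norm (S A x 0) + 2 * (\<Sum>k\<in>{1..m}. (real m + 1 - real k) * norm (S A x (real k)))"
    by (subst double_sum_dist) simp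
  also have "norm (S A x 0) = real (card A)"
  proof -
    have "e 0 = 1" using e_int[of 0] by simp
    then show ?thesis unfolding S_def by simp
  qed
  finally show ?thesis unfolding B_def c0_def .
qed



lemma mvt_within:
  fixes F F' :: "real \<Rightarrow> real"
  assumes st: "s \<le> t" and d: "\<And>x. x \<in> {s..t} \<Longrightarrow> (F has_real_derivative F' x) (at x within {s..t})"
  shows "\<exists>\<xi>\<in>{s..t}. F t - F s = F' \<xi> * (t - s)"
proof (cases "s = t")
  case True then show ?thesis using st by auto
next
  case False
  with st have lt: "s < t" by simp
  have cont: "continuous_on {s..t} F"
    unfolding continuous_on_eq_continuous_within using d DERIV_continuous by blast
  have der: "DERIV F x :> F' x" if "s < x" "x < t" for x
    using d[of x] that at_within_Icc_at[of s x t] by auto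
  have "\<And>x. s < x \<Longrightarrow> x < t \<Longrightarrow> F differentiable (at x)"
    using der real_differentiable_def by blast
  from MVT[OF lt cont this] obtain l z where z: "s < z" "z < t" "DERIV F z :> l" "F t - F s = (t - s) * l"
    by blast
  have "l = F' z" using DERIV_unique[OF z(3) der[OF z(1,2)]] .
  then show ?thesis using z by (intro bexI[of _ z]) auto
qed

lemma deriv_nonpos_antitone:
  fixes F F' :: "real \<Rightarrow> real"
  assumes st: "s \<le> t" and d: "\<And>x. x \<in> {s..t} \<Longrightarrow> (F has_real_derivative F' x) (at x within {s..t})"
    and nonpos: "\<And>x. x \<in> {s..t} \<Longrightarrow> F' x \<le> 0"
  shows "F t \<le> F s"
proof -
  obtain \<xi> where "\<xi> \<in> {s..t}" "F t - F s = F' \<xi> * (t - s)" using mvt_within[OF st d] by blast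
  moreover have "F' \<xi> * (t - s) \<le> 0" using nonpos[OF \<open>\<xi> \<in> {s..t}\<close>] st
    by (simp add: mult_nonpos_nonneg)
  ultimately show ?thesis by linarith
qed

lemma analytic:
  fixes f f' f'' :: "real \<Rightarrow> real" and A B M c \<alpha> :: real
  assumes d1: "\<And>x. x \<in> {A..B} \<Longrightarrow> (f has_real_derivative f' x) (at x within {A..B})"
    and d2: "\<And>x. x \<in> {A..B} \<Longrightarrow> (f' has_real_derivative f'' x) (at x within {A..B})"
    and bM: "\<And>x. x \<in> {A..B} \<Longrightarrow> \<bar>f'' x\<bar> \<le> M"
    and c: "c \<in> {A..B}" and \<alpha>: "\<alpha> = f' c"
    and s: "s \<in> {A..B}" and t: "t \<in> {A..B}"
  shows "\<bar>(f t - \<alpha> * t) - (f s - \<alpha> * s)\<bar> \<le> M * (B - A)^2 / 2"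
proof -
  define k where "k u = f u - \<alpha> * u" for u
  have sub: "{x..y} \<subseteq> {A..B}" if "x \<in> {A..B}" "y \<in> {A..B}" for x y using that by auto
  have lip: "\<bar>f' y - f' x\<bar> \<le> M * \<bar>y - x\<bar>" if xy: "x \<in> {A..B}" "y \<in> {A..B}" for x y
  proof -
    have gen: "\<bar>f' y - f' x\<bar> \<le> M * \<bar>y - x\<bar>" if h: "x \<le> y" "x \<in> {A..B}" "y \<in> {A..B}" for x y
    proof -
      obtain \<xi> where \<xi>: "\<xi> \<in> {x..y}" "f' y - f' x = f'' \<xi> * (y - x)"
        using mvt_within[of x y f' f''] h d2 DERIV_subset[OF d2 sub[OF h(2,3)]] by force
      have "\<xi> \<in> {A..B}" using \<xi>(1) h by auto
      then have "\<bar>f'' \<xi>\<bar> \<le> M" by (rule bM)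
      then show ?thesis using \<xi>(2) h(1) by (simp add: abs_mult mult_right_mono)
    qed
    show ?thesis
    proof (cases "x \<le> y")
      case True then show ?thesis using gen xy by blast
    next
      case False then show ?thesis using gen[of y x] xy by (simp add: abs_minus_commute)
    qed
  qed
  have dk: "(k has_real_derivative (f' x - \<alpha>)) (at x within {y..z})" if "x \<in> {y..z}" "{y..z} \<subseteq> {A..B}" for x y z
    unfolding k_def using that
    by (auto intro!: derivative_eq_intros DERIV_subset[OF d1] simp: subset_iff)
  define Q where "Q u = (if c \<le> u then (u - c)^2 / 2 else 0 - (c - u)^2 / 2)" for u
  have right: "\<bar>k y - k x\<bar> \<le> M * (Q y - Q x)" if "c \<le> x" "x \<le> y" "y \<le> B" for x y
  proof -
    have xy: "x \<in> {A..B}" "y \<in> {A..B}" using that c by auto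
    have "(\<lambda>u. k u - M * (u - c)^2 / 2) y \<le> (\<lambda>u. k u - M * (u - c)^2 / 2) x"
    proof (rule deriv_nonpos_antitone[OF that(2)])
      fix u assume u: "u \<in> {x..y}"
      show "((\<lambda>u. k u - M * (u - c)^2 / 2) has_real_derivative (f' u - \<alpha> - M * (u - c))) (at u within {x..y})"
        using dk[OF u sub[OF xy]] by (auto intro!: derivative_eq_intros simp: field_simps)
      have "u \<in> {A..B}" "c \<le> u" using u xy that by auto
      then show "f' u - \<alpha> - M * (u - c) \<le> 0" using lip[of c u] c \<alpha> by auto
    qed
    moreover have "(\<lambda>u. k u + M * (u - c)^2 / 2) x \<le> (\<lambda>u. k u + M * (u - c)^2 / 2) y"
    proof -
      have "(\<lambda>u. - (k u + M * (u - c)^2 / 2)) y \<le> (\<lambda>u. - (k u + M * (u - c)^2 / 2)) x"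
      proof (rule deriv_nonpos_antitone[OF that(2)])
        fix u assume u: "u \<in> {x..y}"
        show "((\<lambda>u. - (k u + M * (u - c)^2 / 2)) has_real_derivative (- (f' u - \<alpha> + M * (u - c)))) (at u within {x..y})"
          using dk[OF u sub[OF xy]] by (auto intro!: derivative_eq_intros simp: field_simps)
        have "u \<in> {A..B}" "c \<le> u" using u xy that by auto
        then show "- (f' u - \<alpha> + M * (u - c)) \<le> 0" using lip[of c u] c \<alpha> by auto
      qed
      then show ?thesis by simp
    qed
    moreover have "M * (Q y - Q x) = M * (y - c)^2 / 2 - M * (x - c)^2 / 2"
      using that unfolding Q_def by (simp add: right_diff_distrib)
    ultimately show ?thesis unfolding abs_le_iff by simp
  qed
  have left: "\<bar>k y - k x\<bar> \<le> M * (Q y - Q x)" if "A \<le> x" "x \<le> y" "y \<le> c" for x y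
  proof -
    have xy: "x \<in> {A..B}" "y \<in> {A..B}" using that c by auto
    have "(\<lambda>u. k u + M * (c - u)^2 / 2) y \<le> (\<lambda>u. k u + M * (c - u)^2 / 2) x"
    proof (rule deriv_nonpos_antitone[OF that(2)])
      fix u assume u: "u \<in> {x..y}"
      show "((\<lambda>u. k u + M * (c - u)^2 / 2) has_real_derivative (f' u - \<alpha> - M * (c - u))) (at u within {x..y})"
        using dk[OF u sub[OF xy]] by (auto intro!: derivative_eq_intros simp: field_simps)
      have "u \<in> {A..B}" "u \<le> c" using u xy that by auto
      then show "f' u - \<alpha> - M * (c - u) \<le> 0" using lip[of c u] c \<alpha> by auto
    qed
    moreover have "(\<lambda>u. k u - M * (c - u)^2 / 2) x \<le> (\<lambda>u. k u - M * (c - u)^2 / 2) y"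
    proof -
      have "(\<lambda>u. - (k u - M * (c - u)^2 / 2)) y \<le> (\<lambda>u. - (k u - M * (c - u)^2 / 2)) x"
      proof (rule deriv_nonpos_antitone[OF that(2)])
        fix u assume u: "u \<in> {x..y}"
        show "((\<lambda>u. - (k u - M * (c - u)^2 / 2)) has_real_derivative (- (f' u - \<alpha> + M * (c - u)))) (at u within {x..y})"
          using dk[OF u sub[OF xy]] by (auto intro!: derivative_eq_intros simp: field_simps)
        have "u \<in> {A..B}" "u \<le> c" using u xy that by auto
        then show "- (f' u - \<alpha> + M * (c - u)) \<le> 0" using lip[of c u] c \<alpha> by auto
      qed
      then show ?thesis by simp
    qed
    moreover have "M * (Q y - Q x) = M * (c - x)^2 / 2 - M * (c - y)^2 / 2"
      using that unfolding Q_def by (cases "y = c") (auto simp: right_diff_distrib)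
    ultimately show ?thesis unfolding abs_le_iff by simp
  qed
  have both: "\<bar>k y - k x\<bar> \<le> M * (Q y - Q x)" if "A \<le> x" "x \<le> y" "y \<le> B" for x y
  proof (cases "c \<le> x")
    case True then show ?thesis using right that by blast
  next
    case False
    show ?thesis
    proof (cases "y \<le> c")
      case True then show ?thesis using left that by blast
    next
      case False2: False
      have "\<bar>k y - k x\<bar> \<le> \<bar>k y - k c\<bar> + \<bar>k c - k x\<bar>" by linarith
      also have "\<dots> \<le> M * (Q y - Q c) + M * (Q c - Q x)"
        using right[of c y] left[of x c] that False False2 by (intro add_mono) auto
      finally show ?thesis by (simp add: algebra_simps)
    qed
  qed
  have QAB: "Q y - Q x \<le> (B - A)^2 / 2" if "A \<le> x" "x \<le> y" "y \<le> B" for x y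
  proof -
    have "Q y - Q x \<le> Q B - Q A"
    proof -
      have mono: "Q u \<le> Q v" if "u \<le> v" for u v
      proof (cases "c \<le> u")
        case True then show ?thesis using that unfolding Q_def by (auto intro!: divide_right_mono power_mono)
      next
        case False
        then show ?thesis using that unfolding Q_def
          by (auto intro!: divide_right_mono power_mono)
      qed
      show ?thesis using mono[of y B] mono[of A x] that by linarith
    qed
    also have "Q B - Q A = ((B - c)^2 + (c - A)^2) / 2" using c unfolding Q_def by (auto simp: field_simps)
    also have "\<dots> \<le> (B - A)^2 / 2"
    proof -
      have h: "0 \<le> (B - c) * (c - A)" using c by auto
      have e1: "(B - c)^2 + (c - A)^2 = (B-A)^2 - 2*((B - c)*(c - A))" by (simp add: power2_eq_square algebra_simps)
      show ?thesis unfolding e1 using h by (intro divide_right_mono) auto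
    qed
    finally show ?thesis .
  qed
  have M0: "0 \<le> M" using bM[OF c] by linarith
  have "\<bar>k t - k s\<bar> \<le> M * (B - A)^2 / 2"
  proof (cases "s \<le> t")
    case True
    have "\<bar>k t - k s\<bar> \<le> M * (Q t - Q s)" using both[of s t] True s t by auto
    also have "\<dots> \<le> M * ((B - A)^2 / 2)" using QAB[of s t] True s t M0 by (intro mult_left_mono) auto
    finally show ?thesis by simp
  next
    case False
    have "\<bar>k t - k s\<bar> = \<bar>k s - k t\<bar>" by simp
    also have "\<dots> \<le> M * (Q s - Q t)" using both[of t s] False s t by auto
    also have "\<dots> \<le> M * ((B - A)^2 / 2)" using QAB[of t s] False s t M0 by (intro mult_left_mono) auto
    finally show ?thesis by simp
  qed
  then show ?thesis unfolding k_def .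
qed



lemma pi_ub: "pi \<le> 3.15"
  using pi_approx(2) by simp

lemma c_half:
  fixes t :: real
  assumes "0 \<le> t" "t \<le> 3/8"
  shows "1/2 \<le> (1 - 5/3*t^2)^2" and "49/64 \<le> 1 - 5/3*t^2"
proof -
  have "t^2 \<le> (3/8)^2" by (rule power_mono) (use assms in auto)
  then show u: "49/64 \<le> 1 - 5/3*t^2" by (simp add: power2_eq_square)
  have "(49/64)^2 \<le> (1 - 5/3*t^2)^2" by (rule power_mono) (use u in auto)
  moreover have "1/2 \<le> (49/64::real)^2" by (simp add: power2_eq_square)
  ultimately show "1/2 \<le> (1 - 5/3*t^2)^2" by linarith
qed

lemma count_bound2:
  assumes fin: "finite A" and w: "0 \<le> w" and mt: "(real m + 1) * w \<le> t" and t: "0 \<le> t" "t \<le> 3/8"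
  shows "real (card {n\<in>A. \<exists>z::int. \<bar>x n - of_int z\<bar> \<le> w})
     \<le> real (card A) / ((1 - 5/3*t^2)^2 * (real m + 1)) + (\<Sum>k\<in>{1..m}. norm (S A x (real k)) / real k)"
proof -
  define u where "u = 1 - 5/3*t^2"
  define P where "P = (real m + 1)^2 * u^2"
  have u: "49/64 \<le> u" "1/2 \<le> u^2" using c_half[OF t] unfolding u_def by auto
  have P: "(real m + 1)^2 / 2 \<le> P"
  proof -
    have "(real m + 1)^2 * (1/2) \<le> (real m + 1)^2 * u^2" by (rule mult_left_mono) (use u in auto)
    then show ?thesis unfolding P_def by simp
  qed
  have Ppos: "0 < P" unfolding P_def using u by auto
  have cb: "real (card {n\<in>A. \<exists>z::int. \<bar>x n - of_int z\<bar> \<le> w}) * P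
     \<le> (real m + 1) * real (card A) + 2 * (\<Sum>k\<in>{1..m}. (real m + 1 - real k) * norm (S A x (real k)))"
    using count_bound[OF pi_ub fin w mt, of x] u unfolding P_def u_def by (simp add: power_mult_distrib)
  have "2 * (\<Sum>k\<in>{1..m}. (real m + 1 - real k) * norm (S A x (real k)))
      = (\<Sum>k\<in>{1..m}. 2 * ((real m + 1 - real k) * norm (S A x (real k))))"
    by (rule sum_distrib_left)
  also have "\<dots> \<le> (\<Sum>k\<in>{1..m}. P * (norm (S A x (real k)) / real k))"
  proof (intro sum_mono)
    fix k assume k: "k \<in> {1..m}"
    then have k1: "1 \<le> real k" "real k \<le> real m" by auto
    have "4 * real k * (real m + 1 - real k) \<le> (real m + 1)^2"
    proof -
      have "0 \<le> (real m + 1 - 2 * real k)^2" by simp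
      then show ?thesis by (simp add: power2_eq_square algebra_simps)
    qed
    then have "2 * real k * (real m + 1 - real k) \<le> P" using P by linarith
    then have "2 * (real m + 1 - real k) \<le> P / real k" using k1 by (simp add: field_simps)
    then have "(2 * (real m + 1 - real k)) * norm (S A x (real k)) \<le> (P / real k) * norm (S A x (real k))"
      by (rule mult_right_mono) simp
    then show "2 * ((real m + 1 - real k) * norm (S A x (real k))) \<le> P * (norm (S A x (real k)) / real k)"
      by (simp add: algebra_simps)
  qed
  also have "\<dots> = P * (\<Sum>k\<in>{1..m}. norm (S A x (real k)) / real k)" by (simp add: sum_distrib_left)
  finally have "real (card {n\<in>A. \<exists>z::int. \<bar>x n - of_int z\<bar> \<le> w}) * P
     \<le> (real m + 1) * real (card A) + P * (\<Sum>k\<in>{1..m}. norm (S A x (real k)) / real k)"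
    using cb by linarith
  then have "real (card {n\<in>A. \<exists>z::int. \<bar>x n - of_int z\<bar> \<le> w})
     \<le> ((real m + 1) * real (card A) + P * (\<Sum>k\<in>{1..m}. norm (S A x (real k)) / real k)) / P"
    using Ppos by (simp add: field_simps)
  also have "\<dots> = real (card A) / (u^2 * (real m + 1)) + (\<Sum>k\<in>{1..m}. norm (S A x (real k)) / real k)"
  proof -
    have u0: "u \<noteq> 0" using u by auto
    have m0: "real m + 1 \<noteq> 0" by simp
    have "((real m + 1) * real (card A) + P * (\<Sum>k\<in>{1..m}. norm (S A x (real k)) / real k)) / P
        = (real m + 1) * real (card A) / P + (\<Sum>k\<in>{1..m}. norm (S A x (real k)) / real k)"
      using Ppos by (simp add: add_divide_distrib)
    also have "(real m + 1) * real (card A) / P = real (card A) / (u^2 * (real m + 1))"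
    proof -
      have "P = (real m+1) * (u^2*(real m+1))" unfolding P_def by (simp add: power2_eq_square)
      then show ?thesis using mult_divide_mult_cancel_left[OF m0] by simp
    qed
    finally show ?thesis .
  qed
  finally show ?thesis unfolding u_def .
qed



lemma lin_help: "2*(X::real) = Hp + Hm - 2*Y \<Longrightarrow> 2*w = Hp - Hm \<Longrightarrow> Hm \<le> Y \<Longrightarrow> Y \<le> Hp \<Longrightarrow> \<bar>X\<bar> \<le> w"
  unfolding abs_le_iff by (intro conjI) linarith+

lemma lin2: "2*(t::real) = P \<Longrightarrow> 0 \<le> P \<Longrightarrow> P < 1/2 + L \<Longrightarrow> \<not> 1/4 \<le> L \<Longrightarrow> 0 \<le> t \<and> t \<le> 3/8"
  by (intro conjI) linarith+

theorem lemma11: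
  fixes a b :: int and f f' f'' :: "real \<Rightarrow> real" and M \<alpha> R :: real
  assumes "a \<le> b"
    and "\<And>x. x \<in> {real_of_int a..real_of_int b} \<Longrightarrow>
           (f has_real_derivative f' x) (at x within {real_of_int a..real_of_int b})"
    and "\<And>x. x \<in> {real_of_int a..real_of_int b} \<Longrightarrow>
           (f' has_real_derivative f'' x) (at x within {real_of_int a..real_of_int b})"
    and "\<And>x. x \<in> {real_of_int a..real_of_int b} \<Longrightarrow> \<bar>f'' x\<bar> \<le> M"
    and "\<alpha> \<in> f' ` {real_of_int a..real_of_int b}"
    and "R \<ge> 1"
  shows "real (card {n::int. a < n \<and> n \<le> b \<and>
            \<lfloor>f (of_int n)\<rfloor> \<noteq> \<lfloor>of_int n * \<alpha> + f (of_int a) - of_int a * \<alpha>\<rfloor>})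
         \<le> 2 * M * (of_int (b - a)) ^ 3 + of_int (b - a) / R
           + (\<Sum>r\<in>{1..\<lfloor>R\<rfloor>}. (1 / of_int r) *
                cmod (\<Sum>n\<in>{a<..b}. e (of_int n * of_int r * \<alpha>)))"
proof -
  note ab = assms(1) and R1 = assms(6)
  obtain c where c: "c \<in> {real_of_int a..real_of_int b}" and \<alpha>c: "\<alpha> = f' c" using assms(5) by blast
  define k where "k u = f u - \<alpha> * u" for u
  define N where "N = real_of_int (b - a)"
  have N0: "0 \<le> N" unfolding N_def using ab by simp
  have M0: "0 \<le> M" using assms(4)[OF c] by linarith
  have kb: "\<bar>k t - k s\<bar> \<le> M * N^2 / 2"
    if "s \<in> {real_of_int a..real_of_int b}" "t \<in> {real_of_int a..real_of_int b}" for s t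
    using analytic[OF assms(2,3,4) c \<alpha>c that] unfolding k_def N_def by simp
  define hv where "hv n = k (of_int n) - k (of_int a)" for n :: int
  define D where "D = hv ` {a..b}"
  have Dfin: "finite D" and Dne: "D \<noteq> {}" unfolding D_def using ab by auto
  define Hp where "Hp = Max D"
  define Hm where "Hm = Min D"
  have hvD: "Hm \<le> hv n \<and> hv n \<le> Hp" if "n \<in> {a..b}" for n
    unfolding Hp_def Hm_def using Dfin that unfolding D_def by auto
  have "hv a = 0" unfolding hv_def by simp
  then have H0: "Hm \<le> 0" "0 \<le> Hp" using hvD[of a] ab by auto
  define L where "L = Hp - Hm"
  have L0: "0 \<le> L" unfolding L_def using H0 by simp
  have LM: "L \<le> M * N^2 / 2"
  proof -
    obtain n1 where n1: "n1 \<in> {a..b}" "Hp = hv n1" using Max_in[OF Dfin Dne] unfolding Hp_def D_def by auto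
    obtain n2 where n2: "n2 \<in> {a..b}" "Hm = hv n2" using Min_in[OF Dfin Dne] unfolding Hm_def D_def by auto
    have "L = k (of_int n1) - k (of_int n2)" unfolding L_def n1(2) n2(2) hv_def by simp
    also have "\<dots> \<le> \<bar>k (of_int n1) - k (of_int n2)\<bar>" by simp
    also have "\<dots> \<le> M * N^2 / 2" using n1(1) n2(1) by (intro kb) auto
    finally show ?thesis .
  qed
  define g where "g n = of_int n * \<alpha> + f (of_int a) - of_int a * \<alpha>" for n :: int
  define x where "x n = g n + (Hp + Hm) / 2" for n :: int
  define w where "w = L / 2"
  define AA where "AA = {a<..b}"
  have AAfin: "finite AA" unfolding AA_def by simp
  have cardAA: "real (card AA) = N" unfolding AA_def N_def using ab by simp
  define Bs where "Bs = {n\<in>AA. \<exists>z::int. \<bar>x n - of_int z\<bar> \<le> w}"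
  have sub: "{n::int. a < n \<and> n \<le> b \<and> \<lfloor>f (of_int n)\<rfloor> \<noteq> \<lfloor>of_int n * \<alpha> + f (of_int a) - of_int a * \<alpha>\<rfloor>} \<subseteq> Bs"
  proof
    fix n assume "n \<in> {n::int. a < n \<and> n \<le> b \<and> \<lfloor>f (of_int n)\<rfloor> \<noteq> \<lfloor>of_int n * \<alpha> + f (of_int a) - of_int a * \<alpha>\<rfloor>}"
    then have n: "a < n" "n \<le> b" and fl: "\<lfloor>f (of_int n)\<rfloor> \<noteq> \<lfloor>g n\<rfloor>" unfolding g_def by auto
    have fg: "f (of_int n) = g n + hv n" unfolding g_def hv_def k_def by (simp add: algebra_simps)
    have hb: "Hm \<le> hv n" "hv n \<le> Hp" using hvD[of n] n by auto
    have "\<exists>z::int. Hm \<le> of_int z - g n \<and> of_int z - g n \<le> Hp"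
    proof (cases "0 < hv n")
      case True
      define z where "z = \<lfloor>g n + hv n\<rfloor>"
      have "\<lfloor>g n\<rfloor> \<le> z" unfolding z_def using True by (intro floor_mono) simp
      with fl fg have "\<lfloor>g n\<rfloor> < z" unfolding z_def by auto
      then have "g n < of_int z" by (simp add: floor_less_iff)
      moreover have "of_int z \<le> g n + hv n" unfolding z_def by simp
      ultimately show ?thesis using hb H0 by (intro exI[of _ z]) auto
    next
      case False
      define z where "z = \<lfloor>g n\<rfloor>"
      have "\<lfloor>g n + hv n\<rfloor> \<le> z" unfolding z_def using False by (intro floor_mono) simp
      with fl fg have "\<lfloor>g n + hv n\<rfloor> < z" unfolding z_def by auto
      then have "g n + hv n < of_int z" by (simp add: floor_less_iff)
      moreover have "of_int z \<le> g n" unfolding z_def by simp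
      ultimately show ?thesis using hb H0 by (intro exI[of _ z]) auto
    qed
    then obtain z :: int where z: "Hm \<le> of_int z - g n" "of_int z - g n \<le> Hp" by blast
    have xe: "2*(x n - of_int z) = Hp + Hm - 2*(of_int z - g n)" unfolding x_def by (simp add: field_simps)
    have w2: "2*w = Hp - Hm" unfolding w_def L_def by simp
    have "\<bar>x n - of_int z\<bar> \<le> w" by (rule lin_help[OF xe w2 z])
    then show "n \<in> Bs" unfolding Bs_def AA_def using n by auto
  qed
  have Bsfin: "finite Bs" unfolding Bs_def using AAfin by simp
  have card1: "real (card {n::int. a < n \<and> n \<le> b \<and> \<lfloor>f (of_int n)\<rfloor> \<noteq> \<lfloor>of_int n * \<alpha> + f (of_int a) - of_int a * \<alpha>\<rfloor>}) \<le> real (card Bs)"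
    using card_mono[OF Bsfin sub] by simp
  define Tm where "Tm r = (1 / of_int r) * cmod (\<Sum>n\<in>{a<..b}. e (of_int n * of_int r * \<alpha>))" for r :: int
  define Sig where "Sig = (\<Sum>r\<in>{1..\<lfloor>R\<rfloor>}. Tm r)"
  have Tm0: "0 \<le> Tm r" if "1 \<le> r" for r unfolding Tm_def using that by simp
  have Sig0: "0 \<le> Sig" unfolding Sig_def using Tm0 by (intro sum_nonneg) auto
  define K where "K = nat \<lfloor>R\<rfloor>"
  have RK: "real K \<le> R" "R < real K + 1" "1 \<le> K" unfolding K_def using R1
    by (auto simp: of_nat_nat) (linarith | simp add: floor_less_iff)+
  have Sx: "norm (S AA x (real j)) / real j = Tm (int j)" for j :: nat
  proof -
    have "S AA x (real j) = (\<Sum>n\<in>AA. e (of_int n * of_int (int j) * \<alpha>)) * e (real j * (f (of_int a) - of_int a * \<alpha> + (Hp + Hm) / 2))"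
      unfolding S_def sum_distrib_right
      by (intro sum.cong refl) (simp add: e_add[symmetric] x_def g_def algebra_simps)
    then show ?thesis unfolding Tm_def AA_def by (simp add: norm_mult)
  qed
  have sumle: "(\<Sum>j\<in>{1..m}. norm (S AA x (real j)) / real j) \<le> Sig" if "m \<le> K" for m
  proof -
    have "(\<Sum>j\<in>{1..m}. norm (S AA x (real j)) / real j) = (\<Sum>j\<in>{1..m}. Tm (int j))" using Sx by simp
    also have "\<dots> = (\<Sum>r\<in>int ` {1..m}. Tm r)" by (simp add: sum.reindex)
    also have "\<dots> \<le> Sig" unfolding Sig_def
    proof (rule sum_mono2)
      show "int ` {1..m} \<subseteq> {1..\<lfloor>R\<rfloor>}" using that unfolding K_def by auto
      show "0 \<le> Tm r" if "r \<in> {1..\<lfloor>R\<rfloor>} - int ` {1..m}" for r using that Tm0 by auto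
    qed simp
    finally show ?thesis .
  qed
  have fourL: "4 * L * N \<le> 2 * M * N^3"
  proof -
    have "4 * L * N \<le> 4 * (M * N^2 / 2) * N" using LM N0 by (intro mult_right_mono) auto
    then show ?thesis by (simp add: power3_eq_cube power2_eq_square)
  qed
  have NR: "0 \<le> N / R" using N0 R1 by simp
  have main: "real (card Bs) \<le> 4 * L * N + N / R + Sig"
  proof (cases "1/4 \<le> L")
    case True
    have "real (card Bs) \<le> real (card AA)" unfolding Bs_def using AAfin by (intro of_nat_mono card_mono) auto
    also have "\<dots> = N" by (rule cardAA)
    also have "\<dots> \<le> 4 * L * N" using mult_left_mono[of 1 "4*L" N] True N0 by (simp add: algebra_simps)
    finally show ?thesis using NR Sig0 by linarith
  next
    case Lsmall: False
    show ?thesis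
    proof (cases "(real K + 1) * L \<le> 1/2")
      case True
      define t where "t = (real K + 1) * w"
      have t0: "0 \<le> t" "t \<le> 1/4" unfolding t_def w_def using True L0 by (auto simp: algebra_simps)
      define c2 where "c2 = (1 - 5/3*t^2)^2"
      have cb: "real (card Bs) \<le> N / (c2 * (real K + 1)) + (\<Sum>k\<in>{1..K}. norm (S AA x (real k)) / real k)"
      proof -
        have "real (card Bs) \<le> real (card AA) / (c2 * (real K + 1)) + (\<Sum>k\<in>{1..K}. norm (S AA x (real k)) / real k)"
          unfolding Bs_def c2_def by (rule count_bound2[OF AAfin]) (use t0 L0 in \<open>auto simp: t_def w_def\<close>)
        then show ?thesis using cardAA by simp
      qed
      have c2pos: "0 < c2" using c_half[of t] t0 unfolding c2_def by auto
      have c2b: "1 \<le> c2 * (1 + 8 * t)"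
      proof -
        have ce: "c2 = 1 - 10/3*t^2 + (5/3*t^2)^2" unfolding c2_def by (simp add: power2_eq_square algebra_simps)
        have "0 \<le> (5/3*t^2)^2" by simp
        then have "1 - 10/3*t^2 \<le> c2" using ce by linarith
        moreover have "1 \<le> (1 - 10/3*t^2) * (1 + 8*t)"
        proof -
          have s1: "t*t \<le> t/4" using mult_left_mono[of t "1/4" t] t0 by simp
          have "t*t*t \<le> (t/4)*t" using s1 t0 by (intro mult_right_mono) auto
          also have "\<dots> \<le> (t/4)*(1/4)" using t0 by (intro mult_left_mono) auto
          finally have s2: "t*t*t \<le> t/16" by simp
          have "(1 - 10/3*t^2)*(1+8*t) = 1 + 8*t - 10/3*(t*t) - 80/3*(t*t*t)"
            by (simp add: algebra_simps power2_eq_square)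
          then show ?thesis using s1 s2 t0 by linarith
        qed
        moreover have "0 \<le> 1 + 8*t" using t0 by simp
        ultimately show ?thesis by (meson mult_right_mono order_trans)
      qed
      have "N / (c2 * (real K + 1)) \<le> N * (1 + 8*t) / (real K + 1)"
      proof -
        have "1 / c2 \<le> 1 + 8*t" using c2b c2pos by (simp add: field_simps)
        then have "N * (1 / c2) \<le> N * (1 + 8*t)" using N0 by (rule mult_left_mono)
        then have "N * (1 / c2) / (real K + 1) \<le> N * (1 + 8*t) / (real K + 1)" by (rule divide_right_mono) simp
        then show ?thesis by simp
      qed
      also have "\<dots> = N / (real K + 1) + 4 * L * N" unfolding t_def w_def by (simp add: field_simps)
      also have "N / (real K + 1) \<le> N / R" using N0 R1 RK by (intro divide_left_mono) auto
      finally have "N / (c2 * (real K + 1)) \<le> N / R + 4 * L * N" by simp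
      moreover have "(\<Sum>k\<in>{1..K}. norm (S AA x (real k)) / real k) \<le> Sig" by (rule sumle) simp
      ultimately show ?thesis using cb by linarith
    next
      case False
      have Lpos: "0 < L" using False L0 by (cases "L = 0") auto
      define q where "q = \<lceil>1 / (2*L)\<rceil>"
      have q1: "1 / (2*L) \<le> of_int q" "of_int q < 1 / (2*L) + 1" unfolding q_def by linarith+
      have "0 < 1/(2*L)" using Lpos by simp
      then have "0 < real_of_int q" using q1(1) by linarith
      then have qpos: "1 \<le> q" by simp
      define m where "m = nat q - 1"
      have mq: "real m + 1 = of_int q" unfolding m_def using qpos by (simp add: of_nat_diff)
      have "1 / (2*L) < real K + 1" using False Lpos by (simp add: field_simps)
      then have "q \<le> int K + 1" unfolding q_def by (simp add: ceiling_le_iff)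
      then have mK: "m \<le> K" unfolding m_def using qpos by auto
      define t where "t = (real m + 1) * w"
      have qL: "1 \<le> 2 * L * of_int q" using q1(1) Lpos by (simp add: field_simps)
      have "of_int q * L < (1 / (2*L) + 1) * L" using q1(2) Lpos by (intro mult_strict_right_mono) auto
      moreover have "(1 / (2*L) + 1) * L = 1/2 + L" using Lpos by (simp add: field_simps)
      ultimately have "of_int q * L < 1/2 + L" by simp
      moreover have "2*t = of_int q * L" unfolding t_def w_def mq by simp
      moreover have "0 \<le> of_int q * L" using qpos L0 by simp
      ultimately have t0: "0 \<le> t" "t \<le> 3/8" using lin2 Lsmall by blast+
      define c2 where "c2 = (1 - 5/3*t^2)^2"
      have cb: "real (card Bs) \<le> N / (c2 * (real m + 1)) + (\<Sum>k\<in>{1..m}. norm (S AA x (real k)) / real k)"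
      proof -
        have "real (card Bs) \<le> real (card AA) / (c2 * (real m + 1)) + (\<Sum>k\<in>{1..m}. norm (S AA x (real k)) / real k)"
          unfolding Bs_def c2_def by (rule count_bound2[OF AAfin]) (use t0 L0 in \<open>auto simp: t_def w_def\<close>)
        then show ?thesis using cardAA by simp
      qed
      have c2h: "1/2 \<le> c2" using c_half[OF t0] unfolding c2_def by auto
      have "N / (c2 * (real m + 1)) \<le> N / ((1/2) * (real m + 1))"
        using c2h N0 by (intro divide_left_mono mult_right_mono) auto
      also have "\<dots> = 2 * N / of_int q" unfolding mq by simp
      also have "\<dots> \<le> 4 * L * N"
      proof -
        have "2 * N * 1 \<le> 2 * N * (2 * L * of_int q)" using qL N0 by (intro mult_left_mono) auto
        then have "2 * N \<le> 4 * L * N * of_int q" by (simp add: algebra_simps)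
        then show ?thesis using qpos by (simp add: divide_le_eq)
      qed
      finally have "N / (c2 * (real m + 1)) \<le> 4 * L * N" .
      moreover have "(\<Sum>k\<in>{1..m}. norm (S AA x (real k)) / real k) \<le> Sig" by (rule sumle[OF mK])
      ultimately show ?thesis using cb NR by linarith
    qed
  qed
  have "real (card {n::int. a < n \<and> n \<le> b \<and> \<lfloor>f (of_int n)\<rfloor> \<noteq> \<lfloor>of_int n * \<alpha> + f (of_int a) - of_int a * \<alpha>\<rfloor>})
     \<le> 2 * M * N^3 + N / R + Sig" using card1 main fourL by linarith
  then show ?thesis unfolding N_def Sig_def Tm_def by simp
qed

end
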